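(* Let $U\in\mathcal{U}_c$ and suppose that $\eta_U$ is differentiable with $\eta_U'(x)/\eta_U(x)=o(1/x)$ as $x\to\infty$. Then \[ \frac{\omega_U'(x)}{\omega_U(x)}\le o(1/x)\quad\text{as } x\to\infty. \]
   Context: The class $\mathcal{U}$: $U(t)=u(e^{it})$ with $u$ real-valued continuous on $\mathbb{T}$, $u(z)=u(\bar z)$, smooth except possibly at $1$, $U$ even, increasing on $[0,\pi]$, $U(0)=0$, and $h_U(t):=\int_t^\pi U(x)x^{-2}dx\to\infty$ as $t\to0^+$. $\mathcal{U}_c$: those $U\in\mathcal{U}$ with $U'(t)/U(t)\le\alpha/t$ for $0<t\le\pi/2$ for some $0<\alpha<1$. $\eta_U$ is defined by $U(t)=e^{-\eta_U(|\log t|)}$ for $0<t\le1$ with $U(t)\le e^{-1}$; $\omega_U$ is the (increasing) function defined by $\eta_U(x/\omega_U(x))=\omega_U(x)$ for $x\ge0$ with $\eta_U(x)\ge1$. *)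

theory Defs
  imports "HOL-Analysis.Analysis" "HOL-Library.Landau_Symbols"
begin

text \<open>The points of the real line that correspond to z = 1 on the unit circle
  (via t \<mapsto> e^{it}): the integer multiples of 2 pi.\<close>
definition at_one_points :: "real set" where
  "at_one_points = {t. \<exists>k::int. t = 2 * pi * of_int k}"

text \<open>U(t) = u(e^{it}) with u real-valued continuous on the unit circle,
  u(z) = u(conj z), u smooth except possibly at 1 (i.e. U is C-infinity away from
  the multiples of 2 pi), U even, increasing on [0,pi], U(0)=0 and
  h_U(t) = integral_t^pi U(x)/x^2 dx tends to infinity as t -> 0+.\<close>
definition class_U :: "(real \<Rightarrow> real) \<Rightarrow> bool" where
  "class_U U \<longleftrightarrow>
     (\<exists>u :: complex \<Rightarrow> real.
        continuous_on (sphere 0 1) u \<and>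
        (\<forall>z\<in>sphere 0 1. u z = u (cnj z)) \<and>
        (\<forall>t. U t = u (cis t))) \<and>
     (\<forall>n::nat. \<forall>t. t \<notin> at_one_points \<longrightarrow> ((deriv ^^ n) U) differentiable (at t)) \<and>
     (\<forall>t. U (- t) = U t) \<and>
     mono_on {0..pi} U \<and>
     U 0 = 0 \<and>
     filterlim (\<lambda>t. integral {t..pi} (\<lambda>x. U x / x ^ 2)) at_top (at_right 0)"

definition class_Uc :: "(real \<Rightarrow> real) \<Rightarrow> bool" where
  "class_Uc U \<longleftrightarrow> class_U U \<and>
     (\<exists>\<alpha>::real. 0 < \<alpha> \<and> \<alpha> < 1 \<and>
        (\<forall>t. 0 < t \<and> t \<le> pi / 2 \<longrightarrow> deriv U t / U t \<le> \<alpha> / t))"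

text \<open>eta_U: U(t) = exp(-eta_U(|log t|)) for 0 < t \<le> 1, i.e. eta_U(x) = - ln U(e^{-x})
  for x \<ge> 0.  It is meaningful (the paper's domain) where U(e^{-x}) \<le> e^{-1}.\<close>
definition eta_dom :: "(real \<Rightarrow> real) \<Rightarrow> real \<Rightarrow> bool" where
  "eta_dom U x \<longleftrightarrow> 0 \<le> x \<and> U (exp (- x)) \<le> exp (- 1)"

definition eta_U :: "(real \<Rightarrow> real) \<Rightarrow> real \<Rightarrow> real" where
  "eta_U U x = - ln (U (exp (- x)))"

definition omega_U :: "(real \<Rightarrow> real) \<Rightarrow> real \<Rightarrow> real" where
  "omega_U U x = (THE w. 0 < w \<and> eta_dom U (x / w) \<and> eta_U U (x / w) = w)"

end

theory Submission imports Defs begin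

lemma U_cont: assumes "class_U U" shows "continuous_on UNIV U"
proof -
  obtain u :: "complex \<Rightarrow> real" where u: "continuous_on (sphere 0 1) u" "\<forall>t. U t = u (cis t)"
    using assms unfolding class_U_def by blast
  have "continuous_on UNIV (u \<circ> cis)"
    unfolding o_def by (rule continuous_on_compose2[OF u(1)]) (auto intro!: continuous_intros)
  moreover have "U = u \<circ> cis" using u(2) by auto
  ultimately show ?thesis by simp
qed

lemma U_pos: assumes "class_U U" "0 < t" "t \<le> pi" shows "U t > 0"
proof (rule ccontr)
  assume "\<not> U t > 0"
  have mono: "mono_on {0..pi} U" and U0: "U 0 = 0"
    and lim: "filterlim (\<lambda>t. integral {t..pi} (\<lambda>x. U x / x ^ 2)) at_top (at_right 0)"
    using assms(1) unfolding class_U_def by auto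
  have z: "U x = 0" if "0 \<le> x" "x \<le> t" for x
  proof -
    have "U 0 \<le> U x" using mono that assms by (intro mono_onD[OF mono]) auto
    moreover have "U x \<le> U t" using mono that assms by (intro mono_onD[OF mono]) auto
    ultimately show ?thesis using U0 \<open>\<not> U t > 0\<close> by linarith
  qed
  have cont: "continuous_on UNIV U" by (rule U_cont[OF assms(1)])
  define C where "C = integral {t..pi} (\<lambda>x. U x / x ^ 2)"
  have eq: "integral {s..pi} (\<lambda>x. U x / x ^ 2) = C" if "0 < s" "s < t" for s
  proof -
    have int: "(\<lambda>x. U x / x ^ 2) integrable_on {s..pi}"
      by (rule integrable_continuous_interval)
         (use that in \<open>auto intro!: continuous_intros continuous_on_subset[OF cont]\<close>)
    have "integral {s..pi} (\<lambda>x. U x / x ^ 2) = integral {s..t} (\<lambda>x. U x / x ^ 2) + C"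
      unfolding C_def by (rule Henstock_Kurzweil_Integration.integral_combine[symmetric]) (use int that assms in auto)
    moreover have "integral {s..t} (\<lambda>x. U x / x ^ 2) = integral {s..t} (\<lambda>x. 0)"
      by (rule integral_cong) (use z that in auto)
    ultimately show ?thesis by simp
  qed
  have "\<forall>\<^sub>F s in at_right 0. integral {s..pi} (\<lambda>x. U x / x ^ 2) > C"
    using lim unfolding filterlim_at_top_dense by blast
  moreover have "\<forall>\<^sub>F s in at_right 0. s < t \<and> 0 < s"
    using assms(2) by (intro eventually_conj eventually_at_right_less) (auto simp: eventually_at_right_field)
  ultimately have "\<forall>\<^sub>F s in at_right (0::real). False"
    by eventually_elim (use eq in force)
  thus False by simp
qed

theorem lemma6p4:
  fixes U :: "real \<Rightarrow> real"
  assumes "class_Uc U"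
    and "\<forall>x. eta_dom U x \<longrightarrow> eta_U U differentiable (at x)"
    and "(\<lambda>x. deriv (eta_U U) x / eta_U U x) \<in> o[at_top](\<lambda>x. 1 / x)"
  shows "(\<forall>\<^sub>F x in at_top. omega_U U differentiable (at x)) \<and>
         (\<exists>g :: real \<Rightarrow> real. g \<in> o[at_top](\<lambda>x. 1 / x) \<and>
            (\<forall>\<^sub>F x in at_top. deriv (omega_U U) x / omega_U U x \<le> g x))"
proof (cases "\<exists>a. eta_dom U a")
  case False
  have om: "omega_U U = (\<lambda>x. THE w::real. False)"
    using False unfolding omega_U_def by (auto intro!: ext)
  have z: "(\<lambda>x. 0::real) \<in> o[at_top](\<lambda>x. 1 / x)"
    by (rule landau_o.smallI) auto
  show ?thesis unfolding om using z by (intro conjI exI[of _ "\<lambda>x. 0"]) auto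
next
  case True
  then obtain a where a: "eta_dom U a" by blast
  have cU: "class_U U" using assms(1) unfolding class_Uc_def by blast
  have mono: "mono_on {0..pi} U" using cU unfolding class_U_def by blast
  define V where "V s = U (exp (- s))" for s
  define E where "E = eta_U U"
  have E_def': "E s = - ln (V s)" for s unfolding E_def eta_U_def V_def by simp
  have V_pos: "V s > 0" if "0 \<le> s" for s
  proof -
    have "exp (- s) \<le> 1" using that by simp
    hence "exp (- s) \<le> pi" using pi_gt3 by linarith
    thus ?thesis unfolding V_def using pi_gt3 by (intro U_pos[OF cU]) auto
  qed
  have V_anti: "V t \<le> V s" if "0 \<le> s" "s \<le> t" for s t
  proof -
    have "exp (- s) \<le> 1" using that by simp
    hence "exp (- s) \<le> pi" using pi_gt3 by linarith
    have e: "exp (- t) \<le> exp (- s)" using that by simp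
    have m1: "exp (- s) \<in> {0..pi}" using \<open>exp (- s) \<le> pi\<close> by simp
    have "exp (- t) \<le> pi" using \<open>exp (- s) \<le> pi\<close> e by linarith
    hence m2: "exp (- t) \<in> {0..pi}" by simp
    show ?thesis unfolding V_def by (rule mono_onD[OF mono m2 m1 e])
  qed
  have E_mono: "E s \<le> E t" if "0 \<le> s" "s \<le> t" for s t
    unfolding E_def' using V_anti[OF that] V_pos that by simp
  have dom_iff: "eta_dom U s \<longleftrightarrow> 0 \<le> s \<and> V s \<le> exp (- 1)" for s
    unfolding eta_dom_def V_def by simp
  have E_ge1: "E s \<ge> 1" if "eta_dom U s" for s
  proof -
    have "ln (V s) \<le> ln (exp (- 1))"
      using that V_pos unfolding dom_iff by (subst ln_le_cancel_iff) auto
    thus ?thesis unfolding E_def' by simp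
  qed
  have dom_up: "eta_dom U t" if "eta_dom U s" "s \<le> t" for s t
    using that V_anti unfolding dom_iff by force
  have Ediff: "E differentiable (at s)" if "eta_dom U s" for s
    using assms(2) that unfolding E_def by blast
  obtain b0 where b0: "\<And>x. x \<ge> b0 \<Longrightarrow> norm (deriv E x / E x) \<le> 1/2 * norm (1 / x)"
    using landau_o.smallD[OF assms(3), of "1/2"] unfolding E_def eventually_at_top_linorder
    by auto
  define b where "b = max (max b0 a) 1"
  have b1: "b \<ge> 1" and ba: "b \<ge> a" and bb0: "b \<ge> b0" unfolding b_def by auto
  have domb: "eta_dom U s" if "s \<ge> b" for s using dom_up[OF a] ba that by simp
  define G where "G t = t * E t" for t
  have G_strict: "G s < G t" if "eta_dom U s" "eta_dom U t" "s < t" for s t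
  proof -
    have s0: "0 \<le> s" using that dom_iff by auto
    have "s * E s < t * E s" using E_ge1[OF that(1)] that(3) by simp
    also have "\<dots> \<le> t * E t" using E_mono[OF s0 less_imp_le[OF that(3)]] s0 that(3) by (intro mult_left_mono) auto
    finally show ?thesis unfolding G_def .
  qed
  have G_inj: "s = t" if "eta_dom U s" "eta_dom U t" "G s = G t" for s t
    using G_strict[of s t] G_strict[of t s] that by (cases s t rule: linorder_cases) auto
  have G_cont: "continuous_on {b..} G"
  proof -
    have "isCont G s" if "s \<ge> b" for s
      unfolding G_def using differentiable_imp_continuous_within[OF Ediff[OF domb[OF that]]]
      by (intro continuous_intros) (auto simp: continuous_at)
    thus ?thesis by (simp add: continuous_at_imp_continuous_on)
  qed
  define h where "h x = (THE s. b \<le> s \<and> G s = x)" for x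
  have h_G: "h (G s) = s" if "b \<le> s" for s
    unfolding h_def using that domb G_inj by (intro the_equality) auto
  have G_surj: "\<exists>s\<ge>b. G s = x" if xG: "x \<ge> G b" for x
  proof -
    have "G b \<ge> b" unfolding G_def using E_ge1[OF domb[of b]] b1 by simp
    hence xb: "x \<ge> b" using that by simp
    have "G x \<ge> x" unfolding G_def using E_ge1[OF domb[OF xb]] b1 xb by simp
    then obtain s where "b \<le> s" "s \<le> x" "G s = x"
      using IVT'[of G b x x] xG xb continuous_on_subset[OF G_cont] by auto
    thus ?thesis by auto
  qed
  have h_prop: "b \<le> h x \<and> G (h x) = x" if "x \<ge> G b" for x
    using G_surj[OF that] h_G by auto
  have om_eq: "omega_U U x = E (h x)" if "x \<ge> G b" for x
  proof -
    let ?s = "h x"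
    have hs: "b \<le> ?s" "G ?s = x" using h_prop[OF that] by auto
    have Epos: "E ?s > 0" using E_ge1[OF domb[OF hs(1)]] by simp
    have xs: "x / E ?s = ?s" using hs(2) Epos unfolding G_def by (auto simp: field_simps)
    show ?thesis unfolding omega_U_def
    proof (rule the_equality)
      show "0 < E ?s \<and> eta_dom U (x / E ?s) \<and> eta_U U (x / E ?s) = E ?s"
        using Epos xs domb[OF hs(1)] unfolding E_def by simp
    next
      fix w assume w: "0 < w \<and> eta_dom U (x / w) \<and> eta_U U (x / w) = w"
      have "G (x / w) = x" unfolding G_def using w unfolding E_def by simp
      hence "x / w = ?s" using G_inj[of "x / w" ?s] w domb[OF hs(1)] hs by auto
      thus "w = E ?s" using w unfolding E_def by simp
    qed
  qed
  define D where "D s = E s + s * deriv E s" for s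
  have Dbound: "D s \<ge> E s / 2" and Epos: "E s \<ge> 1" if "s \<ge> b" for s
  proof -
    show E1: "E s \<ge> 1" using E_ge1[OF domb[OF that]] .
    have "norm (deriv E s / E s) \<le> 1/2 * norm (1 / s)" using b0 bb0 that by auto
    hence "\<bar>deriv E s\<bar> / E s \<le> 1 / (2 * s)" using E1 that b1 by (simp add: abs_div)
    hence "\<bar>deriv E s\<bar> * s \<le> E s / 2" using E1 that b1 by (simp add: field_simps)
    hence "s * deriv E s \<ge> - (E s / 2)" using that b1 abs_le_iff[of "deriv E s"]
      by (smt (verit) mult.commute mult_minus_left mult_left_mono abs_ge_minus_self)
    thus "D s \<ge> E s / 2" unfolding D_def by simp
  qed
  have om_deriv: "(omega_U U has_field_derivative deriv E (h x) * inverse (D (h x))) (at x)"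
    if "x > G b" for x
  proof -
    let ?s = "h x"
    have hs: "b \<le> ?s" "G ?s = x" using h_prop that by auto
    have sb: "?s > b" using hs that by (cases "?s = b") auto
    have dE: "(E has_field_derivative deriv E ?s) (at ?s)"
      using Ediff[OF domb[OF hs(1)]] by (simp add: DERIV_deriv_iff_real_differentiable)
    have dG: "(G has_field_derivative D ?s) (at ?s)"
      unfolding G_def D_def by (rule derivative_eq_intros dE | simp)+
    have Dnz: "D ?s \<noteq> 0" using Dbound[OF hs(1)] Epos[OF hs(1)] by auto
    have "(h has_derivative (\<lambda>y. inverse (D ?s) * y)) (at (G ?s))"
    proof (rule has_derivative_inverse_strong[of "{b<..}" ?s G h])
      show "continuous_on {b<..} G" by (rule continuous_on_subset[OF G_cont]) auto
      show "(G has_derivative (*) (D ?s)) (at ?s)" using dG by (simp add: has_field_derivative_def)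
      show "(*) (D ?s) \<circ> (\<lambda>y. inverse (D ?s) * y) = id" using Dnz by (auto simp: fun_eq_iff)
    qed (use sb h_G in auto)
    hence dh: "(h has_field_derivative inverse (D ?s)) (at x)"
      using hs by (simp add: has_field_derivative_def)
    have "((\<lambda>y. E (h y)) has_field_derivative deriv E ?s * inverse (D ?s)) (at x)"
      by (rule DERIV_chain2[OF dE dh])
    thus ?thesis
      by (rule has_field_derivative_transform_within_open[of _ _ _ "{G b<..}"])
         (use that om_eq in auto)
  qed
  have part1: "\<forall>\<^sub>F x in at_top. omega_U U differentiable (at x)"
    unfolding eventually_at_top_dense
  proof (intro exI[of _ "G b"] allI impI)
    fix x assume "x > G b"
    thus "omega_U U differentiable (at x)"
      using om_deriv unfolding real_differentiable_def by blast
  qed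
  have part2: "(\<lambda>x. deriv (omega_U U) x / omega_U U x) \<in> o[at_top](\<lambda>x. 1 / x)"
  proof (rule landau_o.smallI)
    fix c :: real assume c: "c > 0"
    obtain S1 where S1: "\<And>x. x \<ge> S1 \<Longrightarrow> norm (deriv E x / E x) \<le> c/2 * norm (1 / x)"
      using landau_o.smallD[OF assms(3), of "c/2"] c unfolding E_def eventually_at_top_linorder
      by auto
    define S where "S = max S1 b"
    have "G S \<ge> G b" using G_strict[of b S] domb unfolding S_def by force
    have "norm (deriv (omega_U U) x / omega_U U x) \<le> c * norm (1 / x)" if x: "x > G S" for x
    proof -
      let ?s = "h x"
      have xGb: "x > G b" using x \<open>G S \<ge> G b\<close> by simp
      have hs: "b \<le> ?s" "G ?s = x" using h_prop xGb by auto
      have sS: "?s > S"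
      proof (rule ccontr)
        assume "\<not> ?s > S"
        hence "G ?s \<le> G S" using G_strict[of ?s S] domb hs(1) unfolding S_def by force
        thus False using hs x by simp
      qed
      have dv: "deriv (omega_U U) x = deriv E ?s * inverse (D ?s)"
        using om_deriv[OF xGb] by (rule DERIV_imp_deriv)
      have ov: "omega_U U x = E ?s" using om_eq xGb by simp
      have E1: "E ?s \<ge> 1" using Epos hs by auto
      have DB: "D ?s \<ge> E ?s / 2" using Dbound hs by auto
      have s0: "?s > 0" using hs b1 by simp
      have "norm (deriv E ?s / E ?s) \<le> c/2 * norm (1 / ?s)" using S1 sS unfolding S_def by auto
      hence q: "\<bar>deriv E ?s\<bar> / E ?s \<le> c / (2 * ?s)" using s0 E1 by (simp add: abs_div)
      have xe: "x = ?s * E ?s" using hs unfolding G_def by simp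
      have "norm (deriv (omega_U U) x / omega_U U x) = (\<bar>deriv E ?s\<bar> / E ?s) / D ?s"
        unfolding dv ov using E1 DB by (simp add: abs_div abs_mult field_simps)
      also have "\<dots> \<le> (c / (2 * ?s)) / (E ?s / 2)"
      proof (rule frac_le[OF _ q _ DB])
        show "0 \<le> c / (2 * ?s)" using c s0 by simp
        show "0 < E ?s / 2" using E1 by simp
      qed
      also have "\<dots> = c / (?s * E ?s)" using s0 E1 by (simp add: field_simps)
      also have "\<dots> = c * norm (1 / x)"
      proof -
        have "0 < ?s * E ?s" using s0 E1 by simp
        hence "x > 0" using xe by simp
        thus ?thesis using xe[symmetric] by simp
      qed
      finally show ?thesis .
    qed
    thus "\<forall>\<^sub>F x in at_top. norm (deriv (omega_U U) x / omega_U U x) \<le> c * norm (1 / x)"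
      unfolding eventually_at_top_dense by blast
  qed
  show ?thesis using part1 part2 by auto
qed
end
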